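(* Let ${\mathcal M}$ be a GLP-algebra and $n<\omega$, and suppose ${\mathcal M}$ enjoys the $\langle n\rangle$-reduction property. Then for every $\phi\in{\mathcal M}$, $$\{Q_n^k(\phi):k<\omega\}\vdash_{\Pi_{n+1}({\mathcal M})}\langle n+1\rangle\phi,$$ i.e. for every $z\in\Pi_{n+1}({\mathcal M})$, if $\langle n+1\rangle\phi\le z$ then there is $k<\omega$ with $Q_n^k(\phi)\le z$.
   Context: A GLP-algebra is a boolean algebra ${\mathcal M}$ with unary operations $\langle n\rangle$, $n<\omega$, satisfying for all $x,y$: (i) $\langle n\rangle(x\vee y)=\langle n\rangle x\vee\langle n\rangle y$; (ii) $\langle n\rangle 0=0$; (iii) $\langle n\rangle x=\langle n\rangle(x\wedge\neg\langle n\rangle x)$; (iv) $\langle n\rangle x\le\langle m\rangle x$ for $m\le n$; (v) $\langle m\rangle x\le[n]\langle m\rangle x$ for $m<n$, where $[n]x:=\neg\langle n\rangle\neg x$. Define $Q_n^0(x)=\top$, $Q_n^{k+1}(x)=\langle n\rangle(x\wedge Q_n^k(x))$. For $A\subseteq{\mathcal M}$, $A\vdash x$ means there are $a_1,\dots,a_k\in A$ with $a_1\wedge\dots\wedge a_k\le x$; $A\vdash B$ means $A\vdash x$ for all $x\in B$; a single element stands for the singleton. $A\vdash_n B$ means: for all $z\in{\mathcal M}$, $B\vdash\langle n\rangle z$ implies $A\vdash\langle n\rangle z$. ${\mathcal M}$ enjoys the $\langle n\rangle$-reduction property if for all $x\in{\mathcal M}$, $\{Q_n^k(x):k<\omega\}\vdash_n\langle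 n+1\rangle x$. $\Pi_{n+1}({\mathcal M})$ is the closure under $\vee,\wedge$ of $\{\top,\bot\}\cup\{\langle k\rangle z:k\le n,z\in{\mathcal M}\}\cup\{[k]z:k<n,z\in{\mathcal M}\}$. $A\vdash_{\Pi_{n+1}({\mathcal M})}B$ means: for all $z\in\Pi_{n+1}({\mathcal M})$, $B\vdash z$ implies $A\vdash z$. *)

theory Defs
  imports Main
begin

definition box :: "(nat \<Rightarrow> 'a::boolean_algebra \<Rightarrow> 'a) \<Rightarrow> nat \<Rightarrow> 'a \<Rightarrow> 'a" where
  "box dia n x = - dia n (- x)"

definition glp_algebra :: "(nat \<Rightarrow> 'a::boolean_algebra \<Rightarrow> 'a) \<Rightarrow> bool" where
  "glp_algebra dia \<longleftrightarrow>
     (\<forall>n x y. dia n (sup x y) = sup (dia n x) (dia n y)) \<and>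
     (\<forall>n. dia n bot = bot) \<and>
     (\<forall>n x. dia n x = dia n (inf x (- dia n x))) \<and>
     (\<forall>m n x. m \<le> n \<longrightarrow> dia n x \<le> dia m x) \<and>
     (\<forall>m n x. m < n \<longrightarrow> dia m x \<le> box dia n (dia m x))"

primrec Q :: "(nat \<Rightarrow> 'a::boolean_algebra \<Rightarrow> 'a) \<Rightarrow> nat \<Rightarrow> nat \<Rightarrow> 'a \<Rightarrow> 'a" where
  "Q dia n 0 x = top"
| "Q dia n (Suc k) x = dia n (inf x (Q dia n k x))"

definition derives :: "'a::boolean_algebra set \<Rightarrow> 'a \<Rightarrow> bool" where
  "derives A x \<longleftrightarrow> (\<exists>as. set as \<subseteq> A \<and> foldr inf as top \<le> x)"

definition derives_set :: "'a::boolean_algebra set \<Rightarrow> 'a set \<Rightarrow> bool" where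
  "derives_set A B \<longleftrightarrow> (\<forall>x\<in>B. derives A x)"

definition derives_n :: "(nat \<Rightarrow> 'a::boolean_algebra \<Rightarrow> 'a) \<Rightarrow> nat \<Rightarrow> 'a set \<Rightarrow> 'a set \<Rightarrow> bool" where
  "derives_n dia n A B \<longleftrightarrow> (\<forall>z. derives B (dia n z) \<longrightarrow> derives A (dia n z))"

definition reduction_property :: "(nat \<Rightarrow> 'a::boolean_algebra \<Rightarrow> 'a) \<Rightarrow> nat \<Rightarrow> bool" where
  "reduction_property dia n \<longleftrightarrow>
     (\<forall>x. derives_n dia n {Q dia n k x | k. True} {dia (Suc n) x})"

inductive_set Pi_set :: "(nat \<Rightarrow> 'a::boolean_algebra \<Rightarrow> 'a) \<Rightarrow> nat \<Rightarrow> 'a set"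
  for dia :: "nat \<Rightarrow> 'a \<Rightarrow> 'a" and n :: nat where
  top_in: "top \<in> Pi_set dia n"
| bot_in: "bot \<in> Pi_set dia n"
| dia_in: "k \<le> n \<Longrightarrow> dia k z \<in> Pi_set dia n"
| box_in: "k < n \<Longrightarrow> box dia k z \<in> Pi_set dia n"
| sup_in: "x \<in> Pi_set dia n \<Longrightarrow> y \<in> Pi_set dia n \<Longrightarrow> sup x y \<in> Pi_set dia n"
| inf_in: "x \<in> Pi_set dia n \<Longrightarrow> y \<in> Pi_set dia n \<Longrightarrow> inf x y \<in> Pi_set dia n"

text \<open>Pi_set dia n is the set called Pi_{n+1}(M) in the paper.\<close>

definition derives_Pi :: "(nat \<Rightarrow> 'a::boolean_algebra \<Rightarrow> 'a) \<Rightarrow> nat \<Rightarrow> 'a set \<Rightarrow> 'a set \<Rightarrow> bool" where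
  "derives_Pi dia n A B \<longleftrightarrow> (\<forall>z\<in>Pi_set dia n. derives B z \<longrightarrow> derives A z)"

end

theory Submission
  imports Defs
begin

lemma bool_sh: "(d::'a::boolean_algebra) \<le> sup a b \<Longrightarrow> inf (- b) d \<le> a"
  by (simp add: inf_commute shunt2 sup_commute)

context
  fixes dia :: "nat \<Rightarrow> 'a::boolean_algebra \<Rightarrow> 'a"
  assumes G: "glp_algebra dia"
begin

lemma GG: "(\<forall>n x y. dia n (sup x y) = sup (dia n x) (dia n y)) \<and>
     (\<forall>n. dia n bot = bot) \<and>
     (\<forall>n x. dia n x = dia n (inf x (- dia n x))) \<and>
     (\<forall>m n x. m \<le> n \<longrightarrow> dia n x \<le> dia m x) \<and>
     (\<forall>m n x. m < n \<longrightarrow> dia m x \<le> box dia n (dia m x))"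
  using G unfolding glp_algebra_def .

lemma d_sup: "dia n (sup x y) = sup (dia n x) (dia n y)"
  using GG[THEN conjunct1] by blast
lemma d_bot: "dia n bot = bot"
  using GG[THEN conjunct2, THEN conjunct1] by blast
lemma d_lob: "dia n x = dia n (inf x (- dia n x))"
  using GG[THEN conjunct2, THEN conjunct2, THEN conjunct1] by blast
lemma d_anti: "m \<le> n \<Longrightarrow> dia n x \<le> dia m x"
  using GG[THEN conjunct2, THEN conjunct2, THEN conjunct2, THEN conjunct1] by blast
lemma d_v: "m < n \<Longrightarrow> dia m x \<le> box dia n (dia m x)"
  using GG[THEN conjunct2, THEN conjunct2, THEN conjunct2, THEN conjunct2] by blast

lemma d_mono: "x \<le> y \<Longrightarrow> dia n x \<le> dia n y"
proof -
  assume "x \<le> y"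
  then have "y = sup x y" by (simp add: sup_absorb2)
  then have "dia n y = sup (dia n x) (dia n y)" by (metis d_sup)
  then show ?thesis by (metis sup.cobounded1)
qed

lemma b_mono: "x \<le> y \<Longrightarrow> box dia n x \<le> box dia n y"
  unfolding box_def by (simp add: d_mono)

lemma b_anti: "m \<le> n \<Longrightarrow> box dia m x \<le> box dia n x"
  unfolding box_def by (simp add: d_anti)

lemma b_inf: "box dia n (inf x y) = inf (box dia n x) (box dia n y)"
  unfolding box_def by (simp add: d_sup)

lemma b_top: "box dia n top = top"
  unfolding box_def by (simp add: d_bot)

lemma b_dia: "inf (box dia n x) (dia n y) \<le> dia n (inf x y)"
proof -
  have "y \<le> sup (inf x y) (- x)" by (simp add: boolean_algebra.disj_conj_distrib2)
  then have "dia n y \<le> dia n (sup (inf x y) (- x))" by (rule d_mono)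
  then have "dia n y \<le> sup (dia n (inf x y)) (dia n (- x))"
    by (simp only: d_sup)
  then show ?thesis unfolding box_def
    by (rule bool_sh)
qed

lemma b_lob: "box dia k y = box dia k (sup y (- box dia k y))"
proof -
  have "dia k (- y) = dia k (inf (- y) (- dia k (- y)))" by (rule d_lob)
  then show ?thesis unfolding box_def by simp
qed

lemma b_4: "box dia k p \<le> box dia k (box dia k p)"
proof -
  define q where "q = inf p (box dia k p)"
  have "box dia k q \<le> box dia k p" unfolding q_def by (simp add: b_mono)
  then have "inf p (box dia k q) \<le> q" unfolding q_def by (simp add: le_infI2)
  then have "p \<le> sup q (- box dia k q)" by (simp add: shunt1 sup_commute)
  then have "box dia k p \<le> box dia k (sup q (- box dia k q))" by (rule b_mono)
  also have "\<dots> = box dia k q" by (rule b_lob[symmetric])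
  also have "\<dots> \<le> box dia k (box dia k p)" unfolding q_def by (simp add: b_mono)
  finally show ?thesis .
qed

lemma d_trans: "dia k (dia k x) \<le> dia k x"
proof -
  have "box dia k (- x) \<le> box dia k (box dia k (- x))" by (rule b_4)
  then show ?thesis unfolding box_def by simp
qed

definition stab :: "nat \<Rightarrow> 'a \<Rightarrow> bool" where
  "stab n c \<longleftrightarrow> c \<le> box dia n c \<and> c \<le> box dia (Suc n) c \<and> dia (Suc n) c \<le> c"

lemma stab_top: "stab n top"
  unfolding stab_def by (simp add: b_top)

lemma stab_inf: "stab n a \<Longrightarrow> stab n b \<Longrightarrow> stab n (inf a b)"
  unfolding stab_def b_inf
  by (meson d_mono inf.cobounded1 inf.cobounded2 inf_mono le_inf_iff order_trans)

lemma dk_box: "k < m \<Longrightarrow> dia k a \<le> box dia m (dia k a)" by (rule d_v)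
lemma dk_dia: "k < m \<Longrightarrow> dia m (dia k a) \<le> dia k a"
  by (meson d_anti d_trans less_imp_le order_trans)
lemma bk_box: "k < m \<Longrightarrow> box dia k b \<le> box dia m (box dia k b)"
  by (meson b_4 b_anti less_imp_le order_trans)
lemma bk_dia: "k < m \<Longrightarrow> dia m (box dia k b) \<le> box dia k b"
proof -
  assume "k < m"
  then have "dia k (- b) \<le> box dia m (dia k (- b))" by (rule d_v)
  then have "dia k (- b) \<le> - dia m (box dia k b)" unfolding box_def by simp
  then show ?thesis unfolding box_def using compl_le_swap1 by blast
qed

lemma stab_dia: "k < n \<Longrightarrow> stab n (dia k a)"
  unfolding stab_def using dk_box dk_dia by simp
lemma stab_box: "k < n \<Longrightarrow> stab n (box dia k a)"
  unfolding stab_def using bk_box bk_dia by simp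

definition Cl :: "nat \<Rightarrow> 'a set" where
  "Cl n = {w. \<exists>Z E. w = sup (dia n Z) E \<and> stab n (- E)}"

inductive_set MC :: "nat \<Rightarrow> 'a set" for n where
  mc_top: "top \<in> MC n"
| mc_cl: "w \<in> Cl n \<Longrightarrow> w \<in> MC n"
| mc_inf: "x \<in> MC n \<Longrightarrow> y \<in> MC n \<Longrightarrow> inf x y \<in> MC n"

lemma cl_sup: "a \<in> Cl n \<Longrightarrow> b \<in> Cl n \<Longrightarrow> sup a b \<in> Cl n"
proof -
  assume "a \<in> Cl n" "b \<in> Cl n"
  then obtain Z1 E1 Z2 E2 where a: "a = sup (dia n Z1) E1" "stab n (- E1)"
    and b: "b = sup (dia n Z2) E2" "stab n (- E2)" unfolding Cl_def by blast
  have "sup a b = sup (dia n (sup Z1 Z2)) (sup E1 E2)"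
    unfolding a b d_sup by (simp add: sup_aci)
  moreover have "stab n (- sup E1 E2)" using a b by (simp add: stab_inf)
  ultimately show ?thesis unfolding Cl_def by blast
qed

lemma mc_sup_cl: "x \<in> MC n \<Longrightarrow> c \<in> Cl n \<Longrightarrow> sup x c \<in> MC n"
proof (induction x rule: MC.induct)
  case mc_top then show ?case by (simp add: MC.mc_top)
next
  case (mc_cl w) then show ?case by (simp add: MC.mc_cl cl_sup)
next
  case (mc_inf x y)
  then have "inf (sup x c) (sup y c) \<in> MC n" by (simp add: MC.mc_inf)
  then show ?case by (simp only: sup_inf_distrib2)
qed

lemma mc_sup: "y \<in> MC n \<Longrightarrow> x \<in> MC n \<Longrightarrow> sup x y \<in> MC n"
proof (induction y rule: MC.induct)
  case mc_top then show ?case by (simp add: MC.mc_top)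
next
  case (mc_cl w) then show ?case by (simp add: mc_sup_cl)
next
  case (mc_inf a b)
  then have "inf (sup x a) (sup x b) \<in> MC n" by (simp add: MC.mc_inf)
  then show ?case by (simp only: sup_inf_distrib1)
qed

lemma cl_mk: "stab n (- E) \<Longrightarrow> sup (dia n Z) E \<in> MC n"
  by (rule mc_cl) (auto simp: Cl_def)

lemma pi_mc: "z \<in> Pi_set dia n \<Longrightarrow> z \<in> MC n"
proof (induction z rule: Pi_set.induct)
  case top_in then show ?case by (rule mc_top)
next
  case bot_in
  have "sup (dia n bot) bot \<in> MC n" by (rule cl_mk) (simp add: stab_top)
  then show ?case by (simp add: d_bot)
next
  case (dia_in k z)
  show ?case
  proof (cases "k = n")
    case True
    have "sup (dia n z) bot \<in> MC n" by (rule cl_mk) (simp add: stab_top)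
    then show ?thesis using True by simp
  next
    case False
    then have "k < n" using dia_in by simp
    have "sup (dia n bot) (dia k z) \<in> MC n"
    proof (rule cl_mk)
      have "- dia k z = box dia k (- z)" unfolding box_def by simp
      then show "stab n (- dia k z)" using stab_box[OF \<open>k < n\<close>] by simp
    qed
    then show ?thesis by (simp add: d_bot)
  qed
next
  case (box_in k z)
  have "sup (dia n bot) (box dia k z) \<in> MC n"
    by (rule cl_mk) (simp add: box_def stab_dia box_in)
  then show ?case by (simp add: d_bot)
next
  case (sup_in x y) then show ?case by (simp add: mc_sup)
next
  case (inf_in x y) then show ?case by (simp add: MC.mc_inf)
qed

lemma Q_Suc_le: "Q dia n (Suc k) x \<le> Q dia n k x"
proof (induction k)
  case 0 then show ?case by simp
next
  case (Suc k)
  then have "inf x (Q dia n (Suc k) x) \<le> inf x (Q dia n k x)" by (rule inf_mono[OF order_refl])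
  then have "dia n (inf x (Q dia n (Suc k) x)) \<le> dia n (inf x (Q dia n k x))" by (rule d_mono)
  then show ?case by simp
qed

lemma Q_anti: "i \<le> j \<Longrightarrow> Q dia n j x \<le> Q dia n i x"
proof (induction j)
  case 0 then show ?case by simp
next
  case (Suc j)
  then show ?case by (metis Q_Suc_le le_Suc_eq order_refl order_trans)
qed

lemma derives_Q: "derives {Q dia n k x | k. True} y \<Longrightarrow> \<exists>k. Q dia n k x \<le> y"
proof -
  assume "derives {Q dia n k x | k. True} y"
  then obtain as where as: "set as \<subseteq> {Q dia n k x | k. True}" "foldr inf as top \<le> y"
    unfolding derives_def by blast
  have "\<exists>k. Q dia n k x \<le> foldr inf as top" using as(1)
  proof (induction as)
    case Nil then show ?case by (metis Q.simps(1) foldr_Nil id_apply order_refl)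
  next
    case (Cons a as)
    then obtain k where k: "Q dia n k x \<le> foldr inf as top" by auto
    from Cons obtain j where j: "a = Q dia n j x" by auto
    have "Q dia n (max j k) x \<le> a" unfolding j by (simp add: Q_anti)
    moreover have "Q dia n (max j k) x \<le> foldr inf as top"
      using k Q_anti[of k "max j k"] by (meson max.cobounded2 order_trans)
    ultimately show ?case by auto
  qed
  then show ?thesis using as(2) by (meson order_trans)
qed

lemma Q_stab: "c \<le> box dia n c \<Longrightarrow> inf (Q dia n k x) c \<le> Q dia n k (inf x c)"
proof (induction k)
  case 0 then show ?case by simp
next
  case (Suc k)
  define A where "A = dia n (inf x (Q dia n k x))"
  have "inf A c \<le> inf (box dia n c) A"
    by (meson Suc.prems inf.cobounded1 inf.cobounded2 le_inf_iff order_trans)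
  then have "inf (Q dia n (Suc k) x) c \<le> inf (box dia n c) A" unfolding A_def by simp
  also have "\<dots> \<le> dia n (inf c (inf x (Q dia n k x)))" unfolding A_def by (rule b_dia)
  also have "\<dots> \<le> dia n (inf (inf x c) (Q dia n k (inf x c)))"
  proof (rule d_mono)
    have h: "inf (Q dia n k x) c \<le> Q dia n k (inf x c)" using Suc by blast
    have "inf c (inf x (Q dia n k x)) \<le> inf (Q dia n k x) c"
      by (meson inf.cobounded1 inf.cobounded2 le_inf_iff)
    then have h2: "inf c (inf x (Q dia n k x)) \<le> Q dia n k (inf x c)" using h by (rule order_trans)
    have "inf c (inf x (Q dia n k x)) \<le> inf x c"
      by (meson inf.cobounded1 inf.cobounded2 le_inf_iff)
    then show "inf c (inf x (Q dia n k x)) \<le> inf (inf x c) (Q dia n k (inf x c))"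
      using h2 by (rule le_infI)
  qed
  finally show ?case by simp
qed

lemma good:
  assumes R: "reduction_property dia n" and w: "w \<in> MC n"
  shows "dia (Suc n) \<phi> \<le> w \<Longrightarrow> \<exists>k. Q dia n k \<phi> \<le> w"
  using w
proof (induction w rule: MC.induct)
  case mc_top then show ?case by (metis Q.simps(1) top_greatest)
next
  case (mc_inf x y)
  then obtain i j where "Q dia n i \<phi> \<le> x" "Q dia n j \<phi> \<le> y" by auto
  then have "Q dia n (max i j) \<phi> \<le> inf x y"
    by (meson Q_anti le_inf_iff max.cobounded1 max.cobounded2 order_trans)
  then show ?case by blast
next
  case (mc_cl w)
  then obtain Z E where wE: "w = sup (dia n Z) E" and st: "stab n (- E)"
    unfolding Cl_def by blast
  define C where "C = - E"
  have s1: "C \<le> box dia n C" "C \<le> box dia (Suc n) C" "dia (Suc n) C \<le> C"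
    using st unfolding stab_def C_def by auto
  have a: "dia (Suc n) (inf \<phi> C) \<le> w"
    by (meson d_mono inf.cobounded1 mc_cl.prems order_trans)
  have b: "dia (Suc n) (inf \<phi> C) \<le> C"
    by (meson d_mono inf.cobounded2 s1(3) order_trans)
  have "inf w C \<le> dia n Z" unfolding wE C_def
    by (simp add: shunt2)
  then have c: "dia (Suc n) (inf \<phi> C) \<le> dia n Z" using a b
    by (meson le_inf_iff order_trans)
  have "derives {dia (Suc n) (inf \<phi> C)} (dia n Z)"
    unfolding derives_def by (rule exI[of _ "[dia (Suc n) (inf \<phi> C)]"]) (simp add: c)
  then have "derives {Q dia n k (inf \<phi> C) | k. True} (dia n Z)"
    using R unfolding reduction_property_def derives_n_def by blast
  then obtain k where k: "Q dia n k (inf \<phi> C) \<le> dia n Z" using derives_Q by blast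
  have "inf (Q dia n k \<phi>) C \<le> dia n Z" using Q_stab[OF s1(1), of k \<phi>] k by simp
  then have "Q dia n k \<phi> \<le> w" unfolding wE C_def by (metis inf_sup_aci(5) sup_neg_inf)
  then show ?case by blast
qed

end

theorem theorem2:
  fixes dia :: "nat \<Rightarrow> 'a::boolean_algebra \<Rightarrow> 'a" and n :: nat
  assumes "glp_algebra dia"
    and "reduction_property dia n"
  shows "\<forall>\<phi>. derives_Pi dia n {Q dia n k \<phi> | k. True} {dia (Suc n) \<phi>}"
proof (intro allI, unfold derives_Pi_def, intro ballI impI)
  fix \<phi> z
  assume z: "z \<in> Pi_set dia n" and d: "derives {dia (Suc n) \<phi>} z"
  then obtain as where as: "set as \<subseteq> {dia (Suc n) \<phi>}" "foldr inf as top \<le> z"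
    unfolding derives_def by blast
  have "dia (Suc n) \<phi> \<le> foldr inf as top" using as(1)
    by (induction as) auto
  then have "dia (Suc n) \<phi> \<le> z" using as(2) by (rule order_trans)
  then obtain k where "Q dia n k \<phi> \<le> z"
    using good[OF assms(1) assms(2) pi_mc[OF assms(1) z]] by blast
  then show "derives {Q dia n k \<phi> | k. True} z"
    unfolding derives_def by (intro exI[of _ "[Q dia n k \<phi>]"]) auto
qed

end
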